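(* Every path-restricted ordered bipartite graph $G=(U,V,E)$ has at most $n\log n+O(n)$ edges, where $n=|U|+|V|$. Moreover the bound is tight up to constant factors: for infinitely many $n$ there exists a path-restricted ordered bipartite graph on $n$ vertices with $\Omega(n\log n)$ edges.
   Context: $\log$ denotes the binary logarithm. An ordered bipartite graph is $G=(U,V,E)$ where $U,V$ are disjoint finite sets, each carrying a strict total order (both written $<$), and $E\subseteq U\times V$. A path is a sequence of edges in which consecutive edges share a vertex. A path visiting the vertices of $U$ in the order $u_1,\dots,u_k$ and those of $V$ in the order $v_1,\dots,v_l$ is a forward path if either $u_1<\dots<u_k$ and $v_1<\dots<v_l$, or $u_1>\dots>u_k$ and $v_1>\dots>v_l$. For $x\le y$ in $U$ write $\langle x,y\rangle=\{u\in U: x\le u\le y\}$, and similarly in $V$. If $u_a<u_b$ are the smallest and largest $U$-vertices and $v_c<v_d$ the smallest and largest $V$-vertices of a forward path $P$, the range of $P$ is $\{\langle u_a,u_b\rangle,\langle v_c,v_d\rangle\}$. A vertex of $P$ is non-terminal if it is adjacent along $P$ to two vertices of $P$. An edge is a back edge to $P$ if either it is $(u_a,v_j)$ with $v_j\in\langle v_c,v_d\rangle$ and $v_j>v'$ for some non-terminal vertex $v'\in V$ of $P$, or it is $(u_i,v_c)$ with $u_i\in\langle u_a,u_b\rangle$ and $u_i>u'$ for some non-terminal vertex $u'\in U$ of $P$. $G$ is a path-restricted ordered bipartite graph (PRBG) if no forward path in $G$ has a back edge in $E$. *)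

theory Defs
  imports Complex_Main
begin

text \<open>Vertices of an ordered bipartite graph: U-vertices are natural numbers tagged
  Inl, V-vertices natural numbers tagged Inr (every finite strict total order is
  isomorphic to a finite set of naturals with their usual order).\<close>

type_synonym vtx = "nat + nat"

definition ordered_bigraph :: "nat set \<Rightarrow> nat set \<Rightarrow> (nat \<times> nat) set \<Rightarrow> bool" where
  "ordered_bigraph U V E \<longleftrightarrow> finite U \<and> finite V \<and> E \<subseteq> U \<times> V"

definition adj :: "(nat \<times> nat) set \<Rightarrow> vtx \<Rightarrow> vtx \<Rightarrow> bool" where
  "adj E x y \<longleftrightarrow>
     (\<exists>u v. x = Inl u \<and> y = Inr v \<and> (u, v) \<in> E) \<or>
     (\<exists>u v. x = Inr v \<and> y = Inl u \<and> (u, v) \<in> E)"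

definition is_path :: "(nat \<times> nat) set \<Rightarrow> vtx list \<Rightarrow> bool" where
  "is_path E ps \<longleftrightarrow> length ps \<ge> 2 \<and> (\<forall>i. i + 1 < length ps \<longrightarrow> adj E (ps ! i) (ps ! (i + 1)))"

definition U_seq :: "vtx list \<Rightarrow> nat list" where
  "U_seq ps = [u. Inl u \<leftarrow> ps]"

definition V_seq :: "vtx list \<Rightarrow> nat list" where
  "V_seq ps = [v. Inr v \<leftarrow> ps]"

definition forward_path :: "(nat \<times> nat) set \<Rightarrow> vtx list \<Rightarrow> bool" where
  "forward_path E ps \<longleftrightarrow> is_path E ps \<and>
     ((sorted_wrt (<) (U_seq ps) \<and> sorted_wrt (<) (V_seq ps)) \<or>
      (sorted_wrt (>) (U_seq ps) \<and> sorted_wrt (>) (V_seq ps)))"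

definition nonterm_U :: "vtx list \<Rightarrow> nat set" where
  "nonterm_U ps = {u. \<exists>i. 0 < i \<and> i + 1 < length ps \<and> ps ! i = Inl u}"

definition nonterm_V :: "vtx list \<Rightarrow> nat set" where
  "nonterm_V ps = {v. \<exists>i. 0 < i \<and> i + 1 < length ps \<and> ps ! i = Inr v}"

definition back_edge :: "vtx list \<Rightarrow> nat \<times> nat \<Rightarrow> bool" where
  "back_edge ps e \<longleftrightarrow>
     (let ua = Min (set (U_seq ps)); ub = Max (set (U_seq ps));
          vc = Min (set (V_seq ps)); vd = Max (set (V_seq ps)) in
      (\<exists>vj. e = (ua, vj) \<and> vc \<le> vj \<and> vj \<le> vd \<and> (\<exists>v' \<in> nonterm_V ps. vj > v')) \<or>
      (\<exists>ui. e = (ui, vc) \<and> ua \<le> ui \<and> ui \<le> ub \<and> (\<exists>u' \<in> nonterm_U ps. ui > u')))"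

definition PRBG :: "nat set \<Rightarrow> nat set \<Rightarrow> (nat \<times> nat) set \<Rightarrow> bool" where
  "PRBG U V E \<longleftrightarrow> ordered_bigraph U V E \<and>
     (\<forall>ps. forward_path E ps \<longrightarrow> \<not> (\<exists>e \<in> E. back_edge ps e))"

end

theory Submission
  imports Defs
begin


lemma U_seq_Cons[simp]: "U_seq (x # xs) = (case x of Inl u \<Rightarrow> u # U_seq xs | Inr _ \<Rightarrow> U_seq xs)"
  by (cases x) (auto simp: U_seq_def)
lemma V_seq_Cons[simp]: "V_seq (x # xs) = (case x of Inr v \<Rightarrow> v # V_seq xs | Inl _ \<Rightarrow> V_seq xs)"
  by (cases x) (auto simp: V_seq_def)
lemma U_seq_Nil[simp]: "U_seq [] = []" by (simp add: U_seq_def)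
lemma V_seq_Nil[simp]: "V_seq [] = []" by (simp add: V_seq_def)
lemma U_seq_append[simp]: "U_seq (xs @ ys) = U_seq xs @ U_seq ys"
  by (induction xs) (auto split: sum.splits)
lemma V_seq_append[simp]: "V_seq (xs @ ys) = V_seq xs @ V_seq ys"
  by (induction xs) (auto split: sum.splits)
lemma U_seq_rev: "U_seq (rev xs) = rev (U_seq xs)"
  by (induction xs) (auto split: sum.splits)
lemma V_seq_rev: "V_seq (rev xs) = rev (V_seq xs)"
  by (induction xs) (auto split: sum.splits)
lemma set_U_seq: "set (U_seq xs) = {u. Inl u \<in> set xs}"
  by (induction xs) (auto split: sum.splits)
lemma set_V_seq: "set (V_seq xs) = {v. Inr v \<in> set xs}"
  by (induction xs) (auto split: sum.splits)

lemma U_mono: "sorted_wrt (<) (U_seq ps) \<Longrightarrow> i < j \<Longrightarrow> j < length ps \<Longrightarrow>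
   ps ! i = Inl a \<Longrightarrow> ps ! j = Inl b \<Longrightarrow> a < b"
proof (induction ps arbitrary: i j)
  case Nil then show ?case by simp
next
  case (Cons x xs)
  show ?case
  proof (cases i)
    case 0
    then have x: "x = Inl a" using Cons by simp
    obtain j' where j: "j = Suc j'" using Cons 0 by (cases j) auto
    have "Inl b \<in> set xs" using Cons j by (metis Suc_less_eq length_Cons nth_Cons_Suc nth_mem)
    then have "b \<in> set (U_seq xs)" by (simp add: set_U_seq)
    then show ?thesis using Cons.prems(1) x by simp
  next
    case (Suc i')
    obtain j' where j: "j = Suc j'" using Cons Suc by (cases j) auto
    have "sorted_wrt (<) (U_seq xs)" using Cons.prems(1) by (cases x) auto
    then show ?thesis using Cons.IH[of i' j'] Cons.prems Suc j by simp
  qed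
qed

lemma V_mono: "sorted_wrt (<) (V_seq ps) \<Longrightarrow> i < j \<Longrightarrow> j < length ps \<Longrightarrow>
   ps ! i = Inr a \<Longrightarrow> ps ! j = Inr b \<Longrightarrow> a < b"
proof (induction ps arbitrary: i j)
  case Nil then show ?case by simp
next
  case (Cons x xs)
  show ?case
  proof (cases i)
    case 0
    then have x: "x = Inr a" using Cons by simp
    obtain j' where j: "j = Suc j'" using Cons 0 by (cases j) auto
    have "Inr b \<in> set xs" using Cons j by (metis Suc_less_eq length_Cons nth_Cons_Suc nth_mem)
    then have "b \<in> set (V_seq xs)" by (simp add: set_V_seq)
    then show ?thesis using Cons.prems(1) x by simp
  next
    case (Suc i')
    obtain j' where j: "j = Suc j'" using Cons Suc by (cases j) auto
    have "sorted_wrt (<) (V_seq xs)" using Cons.prems(1) by (cases x) auto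
    then show ?thesis using Cons.IH[of i' j'] Cons.prems Suc j by simp
  qed
qed

lemma adj_Inl: "adj E (Inl u) y \<Longrightarrow> \<exists>v. y = Inr v \<and> (u,v) \<in> E" by (auto simp: adj_def)
lemma adj_Inr: "adj E (Inr v) y \<Longrightarrow> \<exists>u. y = Inl u \<and> (u,v) \<in> E" by (auto simp: adj_def)
lemma adj_to_Inl: "adj E x (Inl u) \<Longrightarrow> \<exists>v. x = Inr v \<and> (u,v) \<in> E" by (auto simp: adj_def)
lemma adj_to_Inr: "adj E x (Inr v) \<Longrightarrow> \<exists>u. x = Inl u \<and> (u,v) \<in> E" by (auto simp: adj_def)
lemma adj_sym: "adj E x y = adj E y x" by (auto simp: adj_def)



definition conf1 :: "(nat \<times> nat) set \<Rightarrow> bool" where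
 "conf1 E \<longleftrightarrow> (\<exists>u1 u2 v1 z vd w. (u1,v1)\<in>E \<and> (u2,v1)\<in>E \<and> (u1,w)\<in>E \<and> (z,vd)\<in>E \<and>
     u1<u2 \<and> u2\<le>z \<and> v1<w \<and> w\<le>vd)"
definition conf2 :: "(nat \<times> nat) set \<Rightarrow> bool" where
 "conf2 E \<longleftrightarrow> (\<exists>y c v2 x ub b. (y,c)\<in>E \<and> (y,v2)\<in>E \<and> (x,c)\<in>E \<and> (ub,b)\<in>E \<and>
     c<v2 \<and> v2\<le>b \<and> y<x \<and> x\<le>ub)"

lemma incr_conf:
  assumes P: "is_path E ps" and SU: "sorted_wrt (<) (U_seq ps)" and SV: "sorted_wrt (<) (V_seq ps)"
    and e: "e \<in> E" and B: "back_edge ps e"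
  shows "conf1 E \<or> conf2 E"
proof -
  have len: "length ps \<ge> 2" using P by (simp add: is_path_def)
  have step: "\<And>i. i + 1 < length ps \<Longrightarrow> adj E (ps!i) (ps!(i+1))" using P by (simp add: is_path_def)
  have a01: "adj E (ps!0) (ps!1)" using step[of 0] len by simp
  have m0: "ps!0 \<in> set ps" and m1: "ps!1 \<in> set ps" using len by (auto intro!: nth_mem)
  have ne: "set (U_seq ps) \<noteq> {} \<and> set (V_seq ps) \<noteq> {}"
  proof (cases "ps!0")
    case (Inl u)
    then obtain v where "ps!1 = Inr v" using a01 adj_Inl by metis
    then show ?thesis using Inl m0 m1 by (auto simp: set_U_seq set_V_seq)
  next
    case (Inr v)
    then obtain u where "ps!1 = Inl u" using a01 adj_Inr by metis
    then show ?thesis using Inr m0 m1 by (auto simp: set_U_seq set_V_seq)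
  qed
  define ua where "ua = Min (set (U_seq ps))"
  define ub where "ub = Max (set (U_seq ps))"
  define vc where "vc = Min (set (V_seq ps))"
  define vd where "vd = Max (set (V_seq ps))"
  have uaU: "ua \<in> set (U_seq ps)" and ua_le: "\<And>x. x \<in> set (U_seq ps) \<Longrightarrow> ua \<le> x"
    using ne by (auto simp: ua_def)
  have ubU: "ub \<in> set (U_seq ps)" and ub_ge: "\<And>x. x \<in> set (U_seq ps) \<Longrightarrow> x \<le> ub"
    using ne by (auto simp: ub_def)
  have vcV: "vc \<in> set (V_seq ps)" and vc_le: "\<And>x. x \<in> set (V_seq ps) \<Longrightarrow> vc \<le> x"
    using ne by (auto simp: vc_def)
  have vdV: "vd \<in> set (V_seq ps)" and vd_ge: "\<And>x. x \<in> set (V_seq ps) \<Longrightarrow> x \<le> vd"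
    using ne by (auto simp: vd_def)
  have inU: "\<And>i x. i < length ps \<Longrightarrow> ps!i = Inl x \<Longrightarrow> x \<in> set (U_seq ps)"
    by (metis mem_Collect_eq nth_mem set_U_seq)
  have inV: "\<And>i x. i < length ps \<Longrightarrow> ps!i = Inr x \<Longrightarrow> x \<in> set (V_seq ps)"
    by (metis mem_Collect_eq nth_mem set_V_seq)
  from B have "(\<exists>vj. e = (ua,vj) \<and> vc \<le> vj \<and> vj \<le> vd \<and> (\<exists>v'\<in>nonterm_V ps. vj > v')) \<or>
      (\<exists>ui. e = (ui, vc) \<and> ua \<le> ui \<and> ui \<le> ub \<and> (\<exists>u'\<in>nonterm_U ps. ui > u'))"
    unfolding back_edge_def Let_def ua_def ub_def vc_def vd_def by simp
  then show ?thesis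
  proof
    assume "\<exists>vj. e = (ua,vj) \<and> vc \<le> vj \<and> vj \<le> vd \<and> (\<exists>v'\<in>nonterm_V ps. vj > v')"
    then obtain vj v' where ev: "e = (ua,vj)" "vj \<le> vd" "v' \<in> nonterm_V ps" "vj > v'" by blast
    obtain i where i: "0 < i" "i+1 < length ps" "ps!i = Inr v'" using ev(3) by (auto simp: nonterm_V_def)
    obtain a where a: "a < length ps" "ps!a = Inl ua" using uaU by (auto simp: set_U_seq in_set_conv_nth)
    have "adj E (ps!(i-1)) (ps!i)" using step[of "i-1"] i by simp
    then obtain x where x: "ps!(i-1) = Inl x" using adj_to_Inr i by metis
    have ai: "a < i"
    proof (rule ccontr)
      assume "\<not> a < i"
      then have "i - 1 < a" using i by simp
      then have "x < ua" using U_mono[OF SU _ a(1) x a(2)] by simp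
      moreover have "ua \<le> x" using ua_le inU[of "i-1" x] x i by simp
      ultimately show False by simp
    qed
    have "adj E (ps!a) (ps!(a+1))" using step[of a] ai i by simp
    then obtain v1 where v1: "ps!(a+1) = Inr v1" "(ua,v1) \<in> E" using adj_Inl a(2) by metis
    have v1v': "v1 \<le> v'"
    proof (cases "a+1 = i")
      case True then show ?thesis using v1 i by simp
    next
      case False then show ?thesis using V_mono[OF SV _ _ v1(1) i(3)] ai i by simp
    qed
    have "adj E (ps!(a+1)) (ps!(a+2))" using step[of "a+1"] ai i by simp
    then obtain u2 where u2: "ps!(a+2) = Inl u2" "(u2,v1) \<in> E" using adj_Inr v1(1) by metis
    have uau2: "ua < u2" using U_mono[OF SU _ _ a(2) u2(1)] ai i by simp
    obtain p where p: "p < length ps" "ps!p = Inr vd" using vdV by (auto simp: set_V_seq in_set_conv_nth)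
    have v1vd: "v1 < vd" using v1v' ev by simp
    have pa: "a + 2 < p"
    proof (rule ccontr)
      assume "\<not> a + 2 < p"
      moreover have "p \<noteq> a + 2" using p u2 by auto
      moreover have "p \<noteq> a + 1" using p v1 v1vd by auto
      moreover have "\<not> p < a + 1" using V_mono[OF SV _ _ p(2) v1(1)] v1vd ai i by force
      ultimately show False by simp
    qed
    have "adj E (ps!(p-1)) (ps!p)" using step[of "p-1"] pa p by simp
    then obtain z where z: "ps!(p-1) = Inl z" "(z,vd) \<in> E" using adj_to_Inr p(2) by metis
    have u2z: "u2 \<le> z"
    proof (cases "p - 1 = a + 2")
      case True then show ?thesis using z u2 by simp
    next
      case False
      then have "a + 2 < p - 1" using pa by simp
      moreover have "p - 1 < length ps" using p by simp
      ultimately show ?thesis using U_mono[OF SU _ _ u2(1) z(1)] by fastforce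
    qed
    have "conf1 E" unfolding conf1_def
      using v1(2) u2(2) e ev z(2) uau2 u2z v1v' by (intro exI[of _ ua] exI[of _ u2] exI[of _ v1]
          exI[of _ z] exI[of _ vd] exI[of _ vj]) auto
    then show ?thesis by simp
  next
    assume "\<exists>ui. e = (ui, vc) \<and> ua \<le> ui \<and> ui \<le> ub \<and> (\<exists>u'\<in>nonterm_U ps. ui > u')"
    then obtain ui u' where ev: "e = (ui,vc)" "ui \<le> ub" "u' \<in> nonterm_U ps" "ui > u'" by blast
    obtain i where i: "0 < i" "i+1 < length ps" "ps!i = Inl u'" using ev(3) by (auto simp: nonterm_U_def)
    obtain c where c: "c < length ps" "ps!c = Inr vc" using vcV by (auto simp: set_V_seq in_set_conv_nth)
    have "adj E (ps!(i-1)) (ps!i)" using step[of "i-1"] i by simp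
    then obtain x where x: "ps!(i-1) = Inr x" using adj_to_Inl i by metis
    have ci: "c < i"
    proof (rule ccontr)
      assume "\<not> c < i"
      then have "i - 1 < c" using i by simp
      then have "x < vc" using V_mono[OF SV _ c(1) x c(2)] by simp
      moreover have "vc \<le> x" using vc_le inV[of "i-1" x] x i by simp
      ultimately show False by simp
    qed
    have "adj E (ps!c) (ps!(c+1))" using step[of c] ci i by simp
    then obtain y where y: "ps!(c+1) = Inl y" "(y,vc) \<in> E" using adj_Inr c(2) by metis
    have yu': "y \<le> u'"
    proof (cases "c+1 = i")
      case True then show ?thesis using y i by simp
    next
      case False then show ?thesis using U_mono[OF SU _ _ y(1) i(3)] ci i by simp
    qed
    have "adj E (ps!(c+1)) (ps!(c+2))" using step[of "c+1"] ci i by simp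
    then obtain v2 where v2: "ps!(c+2) = Inr v2" "(y,v2) \<in> E" using adj_Inl y(1) by metis
    have vcv2: "vc < v2" using V_mono[OF SV _ _ c(2) v2(1)] ci i by simp
    obtain p where p: "p < length ps" "ps!p = Inl ub" using ubU by (auto simp: set_U_seq in_set_conv_nth)
    have yub: "y < ub" using yu' ev by simp
    have pc: "c + 2 < p"
    proof (rule ccontr)
      assume "\<not> c + 2 < p"
      moreover have "p \<noteq> c + 2" using p v2 by auto
      moreover have "p \<noteq> c + 1" using p y yub by auto
      moreover have "\<not> p < c + 1" using U_mono[OF SU _ _ p(2) y(1)] yub ci i by force
      ultimately show False by simp
    qed
    have "adj E (ps!(p-1)) (ps!p)" using step[of "p-1"] pc p by simp
    then obtain b where b: "ps!(p-1) = Inr b" "(ub,b) \<in> E" using adj_to_Inl p(2) by metis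
    have v2b: "v2 \<le> b"
    proof (cases "p - 1 = c + 2")
      case True then show ?thesis using b v2 by simp
    next
      case False
      then have "c + 2 < p - 1" using pc by simp
      moreover have "p - 1 < length ps" using p by simp
      ultimately show ?thesis using V_mono[OF SV _ _ v2(1) b(1)] by fastforce
    qed
    have "conf2 E" unfolding conf2_def
      using y(2) v2(2) e ev b(2) vcv2 v2b yu' by (intro exI[of _ y] exI[of _ vc] exI[of _ v2]
          exI[of _ ui] exI[of _ ub] exI[of _ b]) auto
    then show ?thesis by simp
  qed
qed



lemma is_path_rev: assumes "is_path E ps" shows "is_path E (rev ps)"
proof -
  have len: "length ps \<ge> 2" and step: "\<And>i. i + 1 < length ps \<Longrightarrow> adj E (ps!i) (ps!(i+1))"
    using assms by (auto simp: is_path_def)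
  have "adj E (rev ps ! i) (rev ps ! (i+1))" if "i + 1 < length ps" for i
  proof -
    have "adj E (ps!(length ps - 2 - i)) (ps!(length ps - 2 - i + 1))" using step that by simp
    moreover have "length ps - 2 - i + 1 = length ps - Suc i" using that by simp
    moreover have "length ps - 2 - i = length ps - Suc (i+1)" using that by simp
    ultimately show ?thesis using that by (simp add: rev_nth adj_sym)
  qed
  then show ?thesis using len by (simp add: is_path_def)
qed

lemma nonterm_V_rev: "nonterm_V ps \<subseteq> nonterm_V (rev ps)"
proof
  fix v assume "v \<in> nonterm_V ps"
  then obtain i where i: "0 < i" "i + 1 < length ps" "ps ! i = Inr v" by (auto simp: nonterm_V_def)
  have "rev ps ! (length ps - 1 - i) = ps ! i" using i by (simp add: rev_nth Suc_diff_Suc)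
  then show "v \<in> nonterm_V (rev ps)" using i unfolding nonterm_V_def
    by (intro CollectI exI[of _ "length ps - 1 - i"]) auto
qed

lemma nonterm_U_rev: "nonterm_U ps \<subseteq> nonterm_U (rev ps)"
proof
  fix v assume "v \<in> nonterm_U ps"
  then obtain i where i: "0 < i" "i + 1 < length ps" "ps ! i = Inl v" by (auto simp: nonterm_U_def)
  have "rev ps ! (length ps - 1 - i) = ps ! i" using i by (simp add: rev_nth Suc_diff_Suc)
  then show "v \<in> nonterm_U (rev ps)" using i unfolding nonterm_U_def
    by (intro CollectI exI[of _ "length ps - 1 - i"]) auto
qed

lemma back_edge_rev: "back_edge ps e \<Longrightarrow> back_edge (rev ps) e"
  using nonterm_V_rev[of ps] nonterm_U_rev[of ps]
  unfolding back_edge_def Let_def U_seq_rev V_seq_rev set_rev by blast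

lemma fwd_conf:
  assumes "forward_path E ps" "e \<in> E" "back_edge ps e"
  shows "conf1 E \<or> conf2 E"
proof -
  have P: "is_path E ps" using assms(1) by (simp add: forward_path_def)
  show ?thesis
  proof (cases "sorted_wrt (<) (U_seq ps) \<and> sorted_wrt (<) (V_seq ps)")
    case True then show ?thesis using incr_conf[OF P _ _ assms(2,3)] by blast
  next
    case False
    then have "sorted_wrt (>) (U_seq ps) \<and> sorted_wrt (>) (V_seq ps)"
      using assms(1) by (auto simp: forward_path_def)
    then have "sorted_wrt (<) (U_seq (rev ps)) \<and> sorted_wrt (<) (V_seq (rev ps))"
      by (simp add: U_seq_rev V_seq_rev sorted_wrt_rev)
    then show ?thesis using incr_conf[OF is_path_rev[OF P] _ _ assms(2) back_edge_rev[OF assms(3)]] by blast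
  qed
qed

lemma conf_PRBG: "ordered_bigraph U V E \<Longrightarrow> \<not> conf1 E \<Longrightarrow> \<not> conf2 E \<Longrightarrow> PRBG U V E"
  unfolding PRBG_def using fwd_conf by blast



definition Ek :: "nat \<Rightarrow> (nat \<times> nat) set" where
  "Ek k = {(u,v). \<exists>j. u + v + 2^j + 1 = (2::nat)^k \<and> even (u div 2^j)}"

lemma odd_shift: "even (u div 2^j) \<Longrightarrow> odd ((u + 2^j) div (2::nat)^j)"
  by simp

lemma pow_sum:
  fixes p q l :: nat
  assumes "q < p" "l < p" "(2::nat)^p \<le> 2^q + 2^l"
  shows "q = l \<and> p = l + 1"
proof -
  have ql: "q = l"
  proof (rule ccontr)
    assume "q \<noteq> l"
    then consider "q < l" | "l < q" by linarith
    then show False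
    proof cases
      case 1
      have "(2::nat)^q < 2^l" using 1 by simp
      moreover have "(2::nat)*2^l \<le> 2^p" using power_increasing[of "l+1" p "2::nat"] assms(2) by simp
      ultimately show False using assms(3) by linarith
    next
      case 2
      have "(2::nat)^l < 2^q" using 2 by simp
      moreover have "(2::nat)*2^q \<le> 2^p" using power_increasing[of "q+1" p "2::nat"] assms(1) by simp
      ultimately show False using assms(3) by linarith
    qed
  qed
  have "(2::nat)^p \<le> 2^(l+1)" using assms(3) ql by simp
  then have "p \<le> l + 1" by (metis one_less_numeral_iff power_le_imp_le_exp semiring_norm(76))
  then show ?thesis using ql assms by simp
qed

lemma not_conf1: "\<not> conf1 (Ek k)"
proof
  assume "conf1 (Ek k)"
  then obtain u1 u2 v1 z vd w where h: "(u1,v1)\<in>Ek k" "(u2,v1)\<in>Ek k" "(u1,w)\<in>Ek k" "(z,vd)\<in>Ek k"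
     "u1<u2" "u2\<le>z" "v1<w" "w\<le>vd" unfolding conf1_def by blast
  obtain p where p: "u1 + v1 + 2^p + 1 = (2::nat)^k" using h(1) by (auto simp: Ek_def)
  obtain q where q: "u2 + v1 + 2^q + 1 = (2::nat)^k" "even (u2 div 2^q)" using h(2) by (auto simp: Ek_def)
  obtain l where l: "u1 + w + 2^l + 1 = (2::nat)^k" "even (u1 div 2^l)" using h(3) by (auto simp: Ek_def)
  obtain r where r: "z + vd + 2^r + 1 = (2::nat)^k" using h(4) by (auto simp: Ek_def)
  have "(2::nat)^q < 2^p" using p q h(5) by linarith
  then have qp: "q < p" by (metis one_less_numeral_iff power_less_imp_less_exp semiring_norm(76))
  have "(2::nat)^l < 2^p" using p l h(7) by linarith
  then have lp: "l < p" by (metis one_less_numeral_iff power_less_imp_less_exp semiring_norm(76))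
  have "(2::nat)^p \<le> 2^q + 2^l" using p q l r h(6,8) by linarith
  then have ql: "q = l" "p = l + 1" using pow_sum qp lp by blast+
  then have "u2 = u1 + 2^l" using p q by simp
  then show False using odd_shift[OF l(2)] q(2) ql by simp
qed

lemma not_conf2: "\<not> conf2 (Ek k)"
proof
  assume "conf2 (Ek k)"
  then obtain y c v2 x ub b where h: "(y,c)\<in>Ek k" "(y,v2)\<in>Ek k" "(x,c)\<in>Ek k" "(ub,b)\<in>Ek k"
     "c<v2" "v2\<le>b" "y<x" "x\<le>ub" unfolding conf2_def by blast
  obtain p where p: "y + c + 2^p + 1 = (2::nat)^k" using h(1) by (auto simp: Ek_def)
  obtain m where m: "y + v2 + 2^m + 1 = (2::nat)^k" "even (y div 2^m)" using h(2) by (auto simp: Ek_def)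
  obtain l where l: "x + c + 2^l + 1 = (2::nat)^k" "even (x div 2^l)" using h(3) by (auto simp: Ek_def)
  obtain r where r: "ub + b + 2^r + 1 = (2::nat)^k" using h(4) by (auto simp: Ek_def)
  have "(2::nat)^m < 2^p" using p m h(5) by linarith
  then have mp: "m < p" by (metis one_less_numeral_iff power_less_imp_less_exp semiring_norm(76))
  have "(2::nat)^l < 2^p" using p l h(7) by linarith
  then have lp: "l < p" by (metis one_less_numeral_iff power_less_imp_less_exp semiring_norm(76))
  have "(2::nat)^p \<le> 2^l + 2^m" using p m l r h(6,8) by linarith
  then have ml: "l = m" "p = m + 1" using pow_sum mp lp by blast+
  then have "x = y + 2^m" using p l by simp
  then show False using odd_shift[OF m(2)] l(2) ml by simp
qed

lemma Ek_sub: "Ek k \<subseteq> {0..<2^k} \<times> {0..<2^k}"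
  by (auto simp: Ek_def)

lemma Ek_PRBG: "PRBG {0..<2^k} {0..<2^k} (Ek k)"
  using conf_PRBG[OF _ not_conf1 not_conf2] Ek_sub by (auto simp: ordered_bigraph_def)



definition Sj :: "nat \<Rightarrow> nat \<Rightarrow> (nat \<times> nat) set" where
 "Sj k j = (\<lambda>(a,r). (a*2^(j+1) + r, 2^k - 1 - 2^j - (a*2^(j+1)+r))) ` ({..<2^(k-1-j)} \<times> {..<2^j})"

lemma Sj_bound:
  assumes "j < k" "a < 2^(k-1-j)" "r < (2::nat)^j"
  shows "a*2^(j+1) + r + 2^j + 1 \<le> (2::nat)^k"
proof -
  have "(a+1)*2^(j+1) \<le> 2^(k-1-j)*(2::nat)^(j+1)" using assms(2) by (intro mult_right_mono) auto
  also have "\<dots> = 2^k"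
  proof -
    have "k - 1 - j + (j+1) = k" using assms(1) by simp
    then show ?thesis by (metis power_add)
  qed
  finally have "(a+1)*2^(j+1) \<le> (2::nat)^k" .
  then show ?thesis using assms(3) by simp
qed

lemma Sj_mem:
  assumes "j < k" "x \<in> Sj k j"
  shows "fst x + snd x + 2^j + 1 = (2::nat)^k \<and> even (fst x div 2^j)"
proof -
  obtain a r where ar: "a < 2^(k-1-j)" "r < (2::nat)^j" "x = (a*2^(j+1) + r, 2^k - 1 - 2^j - (a*2^(j+1)+r))"
    using assms(2) by (auto simp: Sj_def)
  have b: "a*2^(j+1) + r + 2^j + 1 \<le> (2::nat)^k" using Sj_bound[OF assms(1) ar(1,2)] .
  have e1: "(r + (2*a)*2^j) div 2^j = 2*a + r div (2::nat)^j" by (rule div_mult_self1) simp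
  have eq: "a*2^(j+1) + r = r + (2*a)*2^j" by simp
  have "(a*2^(j+1) + r) div 2^j = 2*a + r div 2^j" unfolding eq by (rule e1)
  also have "\<dots> = 2*a" using ar(2) by simp
  finally have "even ((a*2^(j+1) + r) div 2^j)" by simp
  then show ?thesis using ar(3) b by simp
qed

lemma Sj_sub: "j < k \<Longrightarrow> Sj k j \<subseteq> Ek k"
  using Sj_mem unfolding Ek_def by (force)

lemma divmod_aux: "r < (m::nat) \<Longrightarrow> r' < m \<Longrightarrow> a*m + r = a'*m + r' \<Longrightarrow> a = a' \<and> r = r'"
proof -
  assume h: "r < m" "r' < m" "a*m + r = a'*m + r'"
  have m0: "m \<noteq> 0" using h by simp
  have "(r + a*m) div m = a + r div m" by (rule div_mult_self1[OF m0])
  then have d1: "(a*m + r) div m = a" using h(1) by (simp add: add.commute)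
  have "(r' + a'*m) div m = a' + r' div m" by (rule div_mult_self1[OF m0])
  then have d2: "(a'*m + r') div m = a'" using h(2) by (simp add: add.commute)
  have "a = a'" using d1 d2 h(3) by simp
  then show ?thesis using h by simp
qed

lemma Sj_card: assumes "j < k" shows "card (Sj k j) = 2^(k-1)"
proof -
  define f where "f = (\<lambda>(a,r). (a*2^(j+1) + r, 2^k - 1 - 2^j - (a*2^(j+1)+r::nat)))"
  define D where "D = {..<(2::nat)^(k-1-j)} \<times> {..<(2::nat)^j}"
  have inj: "inj_on f D"
  proof (rule inj_onI)
    fix x y assume xy: "x \<in> D" "y \<in> D" "f x = f y"
    obtain a r a' r' where ar: "x = (a,r)" "y = (a',r')" by (cases x, cases y) auto
    have "r < 2^j" "r' < 2^j" using xy ar by (auto simp: D_def)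
    then have "r < 2^(j+1)" "r' < 2^(j+1)" by auto
    moreover have "a*2^(j+1) + r = a'*2^(j+1) + r'" using xy(3) ar by (simp add: f_def)
    ultimately show "x = y" using divmod_aux ar by blast
  qed
  have "card (Sj k j) = 2^(k-1-j) * 2^j" unfolding Sj_def f_def[symmetric] D_def[symmetric]
    using card_image[OF inj] by (simp add: card_cartesian_product D_def)
  also have "\<dots> = 2^(k-1)"
  proof -
    have "k - 1 - j + j = k - 1" using assms by simp
    then show ?thesis by (metis power_add)
  qed
  finally show ?thesis .
qed

lemma Ek_finite: "finite (Ek k)"
  using Ek_sub by (rule finite_subset) auto

lemma Ek_card: "k * 2^(k-1) \<le> card (Ek k)"
proof -
  have disj: "\<forall>j\<in>{..<k}. \<forall>j'\<in>{..<k}. j \<noteq> j' \<longrightarrow> Sj k j \<inter> Sj k j' = {}"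
  proof (intro ballI impI)
    fix j j' assume jj: "j \<in> {..<k}" "j' \<in> {..<k}" "j \<noteq> j'"
    show "Sj k j \<inter> Sj k j' = {}"
    proof (rule ccontr)
      assume "Sj k j \<inter> Sj k j' \<noteq> {}"
      then obtain x where "x \<in> Sj k j" "x \<in> Sj k j'" by blast
      then have h: "fst x + snd x + 2^j + 1 = (2::nat)^k" "fst x + snd x + 2^j' + 1 = (2::nat)^k"
        using Sj_mem[of j k x] Sj_mem[of j' k x] jj by auto
      then have "(2::nat)^j = 2^j'" by linarith
      then show False using jj(3) by simp
    qed
  qed
  have fin: "\<forall>j\<in>{..<k}. finite (Sj k j)" using Sj_sub Ek_finite finite_subset by blast
  have "card (\<Union>j\<in>{..<k}. Sj k j) = (\<Sum>j<k. card (Sj k j))"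
    using card_UN_disjoint[OF _ fin disj] by simp
  also have "\<dots> = k * 2^(k-1)" using Sj_card by simp
  finally have eq: "card (\<Union>j\<in>{..<k}. Sj k j) = k * 2^(k-1)" .
  have "(\<Union>j\<in>{..<k}. Sj k j) \<subseteq> Ek k" using Sj_sub by blast
  then have "card (\<Union>j\<in>{..<k}. Sj k j) \<le> card (Ek k)" using Ek_finite card_mono by blast
  then show ?thesis using eq by simp
qed



definition pfree :: "(nat \<times> nat) set \<Rightarrow> bool" where
 "pfree P \<longleftrightarrow> (\<forall>u1 u2 v1 w v2. (u1,v1)\<in>P \<longrightarrow> (u1,w)\<in>P \<longrightarrow> (u2,v1)\<in>P \<longrightarrow> (u2,v2)\<in>P \<longrightarrow>
     u1<u2 \<longrightarrow> v1<w \<longrightarrow> w\<le>v2 \<longrightarrow> False)"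

lemma pfree_subset: "pfree P \<Longrightarrow> Q \<subseteq> P \<Longrightarrow> pfree Q"
  unfolding pfree_def by blast

lemma count:
  "finite P \<Longrightarrow> pfree P \<Longrightarrow> snd ` P \<subseteq> {s..<s+2^k} \<Longrightarrow>
     2 * card P \<le> 2*(k+1)*card (fst ` P) + k*2^k"
proof (induction k arbitrary: s P)
  case 0
  have "inj_on fst P"
  proof (rule inj_onI)
    fix x y assume "x \<in> P" "y \<in> P" "fst x = fst y"
    then show "x = y" using 0(3) by (auto simp: prod_eq_iff)
  qed
  then show ?case by (simp add: card_image)
next
  case (Suc k)
  define M where "M = s + 2^k"
  define PL where "PL = {x\<in>P. snd x < M}"
  define PR where "PR = {x\<in>P. M \<le> snd x}"
  define RR where "RR = fst ` PR"
  define A where "A = {x\<in>PL. fst x \<notin> RR}"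
  define B where "B = {x\<in>PL. fst x \<in> RR}"
  define B1 where "B1 = {x\<in>B. \<forall>y\<in>PL. fst y = fst x \<longrightarrow> snd y \<le> snd x}"
  define B2 where "B2 = B - B1"
  have fin: "finite A" "finite B1" "finite B2" "finite PR" "finite PL" "finite B"
    using Suc.prems(1) by (auto simp: A_def B1_def B2_def B_def PL_def PR_def)
  have Peq: "P = A \<union> B1 \<union> B2 \<union> PR" by (auto simp: A_def B1_def B2_def B_def PL_def PR_def)
  have cP: "card P = card A + card B1 + card B2 + card PR"
  proof -
    have "card P = card (A \<union> B1 \<union> B2) + card PR"
      unfolding Peq using fin by (subst card_Un_disjoint) (auto simp: A_def B1_def B2_def B_def PL_def PR_def)
    also have "card (A \<union> B1 \<union> B2) = card (A \<union> B1) + card B2"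
      using fin by (subst card_Un_disjoint) (auto simp: B2_def A_def B_def)
    also have "card (A \<union> B1) = card A + card B1"
      using fin by (subst card_Un_disjoint) (auto simp: B1_def A_def B_def)
    finally show ?thesis by simp
  qed
  have pA: "pfree A" "pfree PR" using Suc.prems(2) by (auto intro: pfree_subset simp: A_def PL_def PR_def)
  have sA: "snd ` A \<subseteq> {s..<s+2^k}" using Suc.prems(3) by (auto simp: A_def PL_def M_def)
  have sR: "snd ` PR \<subseteq> {M..<M+2^k}" using Suc.prems(3) by (auto simp: PR_def M_def)
  have IA: "2 * card A \<le> 2*(k+1)*card (fst ` A) + k*2^k" using Suc.IH[OF fin(1) pA(1) sA] .
  have IR: "2 * card PR \<le> 2*(k+1)*card RR + k*2^k" using Suc.IH[OF fin(4) pA(2) sR] unfolding RR_def .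
  have cB1: "card B1 \<le> card RR"
  proof -
    have "inj_on fst B1"
    proof (rule inj_onI)
      fix x y assume "x \<in> B1" "y \<in> B1" "fst x = fst y"
      then have "snd y \<le> snd x" "snd x \<le> snd y" by (auto simp: B1_def B_def)
      then show "x = y" using \<open>fst x = fst y\<close> by (simp add: prod_eq_iff)
    qed
    moreover have "fst ` B1 \<subseteq> RR" by (auto simp: B1_def B_def)
    moreover have "finite RR" using fin(4) by (simp add: RR_def)
    ultimately show ?thesis by (metis card_image card_mono)
  qed
  have key: "False" if x: "x \<in> B2" and y: "y \<in> B" and e: "snd x = snd y" and lt: "fst x < fst y" for x y
  proof -
    obtain y' where y': "y' \<in> PL" "fst y' = fst x" "snd x < snd y'" using x by (auto simp: B2_def B1_def B_def not_le)
    obtain z where z: "z \<in> PR" "fst z = fst y" using y by (auto simp: B_def RR_def)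
    have m: "x \<in> P" "y \<in> P" "y' \<in> P" "z \<in> P" using x y y' z
      by (auto simp: B2_def B_def PL_def PR_def)
    have "snd y' \<le> snd z" using y' z by (auto simp: PL_def PR_def)
    then show False using Suc.prems(2) m y' z e lt unfolding pfree_def
      by (metis prod.collapse)
  qed
  have cB2: "card B2 \<le> 2^k"
  proof -
    have "inj_on snd B2"
    proof (rule inj_onI)
      fix x y assume xy: "x \<in> B2" "y \<in> B2" "snd x = snd y"
      have "y \<in> B" "x \<in> B" using xy by (auto simp: B2_def)
      consider "fst x < fst y" | "fst y < fst x" | "fst x = fst y" by linarith
      then show "x = y"
      proof cases
        case 1 then show ?thesis using key[OF xy(1) \<open>y \<in> B\<close> xy(3)] by simp
      next
        case 2 then show ?thesis using key[OF xy(2) \<open>x \<in> B\<close> xy(3)[symmetric]] by simp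
      next
        case 3 then show ?thesis using xy(3) by (simp add: prod_eq_iff)
      qed
    qed
    moreover have "snd ` B2 \<subseteq> {s..<s+2^k}" using Suc.prems(3) by (auto simp: B2_def B_def PL_def M_def)
    ultimately show ?thesis by (metis card_atLeastLessThan card_image card_mono diff_add_inverse finite_atLeastLessThan)
  qed
  have cF: "card (fst ` A) + card RR \<le> card (fst ` P)"
  proof -
    have "fst ` A \<inter> RR = {}" by (auto simp: A_def)
    moreover have "fst ` A \<union> RR \<subseteq> fst ` P" by (auto simp: A_def PL_def RR_def PR_def)
    moreover have "finite (fst ` P)" using Suc.prems(1) by simp
    ultimately show ?thesis by (metis card_Un_disjoint card_mono finite_subset le_sup_iff)
  qed
  have cRP: "card RR \<le> card (fst ` P)" using cF by simp
  have m1: "(k+1) * (card (fst ` A) + card RR) \<le> (k+1) * card (fst ` P)" by (rule mult_le_mono2[OF cF])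
  have "2 * card P \<le> 2*(k+1)*card (fst ` A) + k*2^k + (2*(k+1)*card RR + k*2^k) + 2*card RR + 2*2^k"
    using cP IA IR cB1 cB2 by linarith
  also have "\<dots> = 2*((k+1) * (card (fst ` A) + card RR)) + 2 * card RR + (k+1)*2^(Suc k)"
    by (simp add: algebra_simps)
  also have "\<dots> \<le> 2*(Suc k+1)*card (fst ` P) + Suc k * 2^Suc k"
    using m1 cRP by (simp add: algebra_simps)
  finally show ?case .
qed



lemma PRBG_pfree: assumes "PRBG U V E" shows "pfree E"
  unfolding pfree_def
proof (intro allI impI)
  fix u1 u2 v1 w v2
  assume h: "(u1,v1)\<in>E" "(u1,w)\<in>E" "(u2,v1)\<in>E" "(u2,v2)\<in>E" "u1<u2" "v1<w" "w\<le>v2"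
  define ps where "ps = [Inl u1, Inr v1, Inl u2, Inr v2]"
  have "is_path E ps" unfolding is_path_def
  proof (intro conjI allI impI)
    show "2 \<le> length ps" by (simp add: ps_def)
    fix i assume "i + 1 < length ps"
    then have "i = 0 \<or> i = 1 \<or> i = 2" by (auto simp: ps_def)
    then show "adj E (ps ! i) (ps ! (i + 1))" using h by (auto simp: ps_def adj_def)
  qed
  moreover have "U_seq ps = [u1,u2]" "V_seq ps = [v1,v2]" by (simp_all add: ps_def)
  ultimately have fp: "forward_path E ps" using h by (simp add: forward_path_def)
  have nt: "v1 \<in> nonterm_V ps" unfolding nonterm_V_def
    by (intro CollectI exI[of _ 1]) (simp add: ps_def)
  have "back_edge ps (u1,w)" unfolding back_edge_def Let_def
    using \<open>U_seq ps = [u1,u2]\<close> \<open>V_seq ps = [v1,v2]\<close> h nt by auto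
  then show False using assms fp h(2) unfolding PRBG_def by blast
qed

lemma compress:
  assumes fin: "finite V" and E: "E \<subseteq> U \<times> V" and pf: "pfree E"
  defines "f \<equiv> \<lambda>v. card {x\<in>V. x < v}"
  shows "card ((\<lambda>(u,v). (u, f v)) ` E) = card E"
    and "pfree ((\<lambda>(u,v). (u, f v)) ` E)"
    and "snd ` ((\<lambda>(u,v). (u, f v)) ` E) \<subseteq> {0..<card V}"
    and "fst ` ((\<lambda>(u,v). (u, f v)) ` E) \<subseteq> U"
proof -
  have lt: "f v < f v'" if "v \<in> V" "v' \<in> V" "v < v'" for v v'
  proof -
    have "{x\<in>V. x < v} \<subset> {x\<in>V. x < v'}" using that by auto
    then show ?thesis unfolding f_def by (rule psubset_card_mono[rotated]) (simp add: fin)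
  qed
  have iff: "f v < f v' \<longleftrightarrow> v < v'" if "v \<in> V" "v' \<in> V" for v v'
    using lt[OF that] lt[OF that(2,1)] by (metis less_asym linorder_neqE_nat)
  have iffle: "f v \<le> f v' \<longleftrightarrow> v \<le> v'" if "v \<in> V" "v' \<in> V" for v v'
    using iff[OF that(2,1)] by (simp add: not_less[symmetric])
  have inj: "inj_on (\<lambda>(u,v). (u, f v)) E"
  proof (rule inj_onI)
    fix x y assume xy: "x \<in> E" "y \<in> E" "(\<lambda>(u,v). (u, f v)) x = (\<lambda>(u,v). (u, f v)) y"
    obtain a b c d where ab: "x = (a,b)" "y = (c,d)" by (cases x, cases y) auto
    have bV: "b \<in> V" and dV: "d \<in> V" using xy ab E by auto
    have "f b = f d" "a = c" using xy ab by auto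
    then have "b \<le> d" "d \<le> b" using iffle[OF bV dV] iffle[OF dV bV] by auto
    then show "x = y" using ab \<open>a = c\<close> by simp
  qed
  then show "card ((\<lambda>(u,v). (u, f v)) ` E) = card E" by (rule card_image)
  show "pfree ((\<lambda>(u,v). (u, f v)) ` E)" unfolding pfree_def
  proof (intro allI impI)
    fix u1 u2 v1 w v2
    assume h: "(u1,v1)\<in>(\<lambda>(u,v). (u, f v)) ` E" "(u1,w)\<in>(\<lambda>(u,v). (u, f v)) ` E"
       "(u2,v1)\<in>(\<lambda>(u,v). (u, f v)) ` E" "(u2,v2)\<in>(\<lambda>(u,v). (u, f v)) ` E" "u1<u2" "v1<w" "w\<le>v2"
    obtain a1 where a1: "(u1,a1) \<in> E" "f a1 = v1" using h(1) by auto
    obtain a2 where a2: "(u1,a2) \<in> E" "f a2 = w" using h(2) by auto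
    obtain a3 where a3: "(u2,a3) \<in> E" "f a3 = v1" using h(3) by auto
    obtain a4 where a4: "(u2,a4) \<in> E" "f a4 = v2" using h(4) by auto
    have V: "a1 \<in> V" "a2 \<in> V" "a3 \<in> V" "a4 \<in> V" using a1 a2 a3 a4 E by auto
    have "a1 = a3" using iffle[OF V(1) V(3)] iffle[OF V(3) V(1)] a1 a3 by simp
    moreover have "a1 < a2" using iff[OF V(1) V(2)] a1 a2 h(6) by simp
    moreover have "a2 \<le> a4" using iffle[OF V(2) V(4)] a2 a4 h(7) by simp
    ultimately show False using pf a1 a2 a3 a4 h(5) unfolding pfree_def by blast
  qed
  show "snd ` ((\<lambda>(u,v). (u, f v)) ` E) \<subseteq> {0..<card V}"
  proof
    fix y assume "y \<in> snd ` ((\<lambda>(u,v). (u, f v)) ` E)"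
    then obtain u v where uv: "(u,v) \<in> E" "y = f v" by auto
    then have "v \<in> V" using E by auto
    then have "{x\<in>V. x < v} \<subset> V" by auto
    then have "f v < card V" unfolding f_def by (rule psubset_card_mono[rotated]) (simp add: fin)
    then show "y \<in> {0..<card V}" using uv by simp
  qed
  show "fst ` ((\<lambda>(u,v). (u, f v)) ` E) \<subseteq> U" using E by auto
qed

lemma nlogn_nonneg: "0 \<le> real n * log 2 (real n)"
  by (cases "n = 0") auto

lemma upper:
  assumes G: "PRBG U V E"
  shows "real (card E) \<le> real (card U + card V) * log 2 (real (card U + card V))
                             + 2 * real (card U + card V)"
proof -
  have fU: "finite U" and fV: "finite V" and EUV: "E \<subseteq> U \<times> V" using G by (auto simp: PRBG_def ordered_bigraph_def)
  have pf: "pfree E" using PRBG_pfree[OF G] .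
  define a where "a = card U"
  define b where "b = card V"
  define n where "n = a + b"
  show ?thesis
  proof (cases "b = 0")
    case True
    then have "V = {}" using fV by (simp add: b_def)
    then have "E = {}" using EUV by auto
    then show ?thesis using nlogn_nonneg[of "card U + card V"] by simp
  next
    case False
    then have b1: "b \<ge> 1" by simp
    define k where "k = (LEAST k. b \<le> 2^k)"
    have ex: "\<exists>k. b \<le> 2^k" using less_exp[of b] less_imp_le by blast
    have bk: "b \<le> 2^k" unfolding k_def using LeastI_ex[OF ex] .
    have kb: "2^k < 2*b"
    proof (cases k)
      case 0 then show ?thesis using b1 by simp
    next
      case (Suc k')
      then have "k' < (LEAST k. b \<le> 2^k)" using k_def by simp
      then have "\<not> b \<le> 2^k'" by (rule not_less_Least)
      then show ?thesis using Suc by simp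
    qed
    define f where "f = (\<lambda>v. card {x\<in>V. x < v})"
    define P where "P = (\<lambda>(u,v). (u, f v)) ` E"
    have cP: "card P = card E" and pP: "pfree P" and sP: "snd ` P \<subseteq> {0..<card V}"
       and fP: "fst ` P \<subseteq> U"
      using compress[OF fV EUV pf] unfolding P_def f_def by auto
    have finE: "finite E" using EUV fU fV by (meson finite_SigmaI finite_subset)
    have finP: "finite P" unfolding P_def using finE by simp
    have sP': "snd ` P \<subseteq> {0..<0+2^k}" using sP bk unfolding b_def by auto
    have cnt: "2 * card P \<le> 2*(k+1)*card (fst ` P) + k*2^k" using count[OF finP pP sP'] .
    have "card (fst ` P) \<le> a" unfolding a_def using fP fU card_mono by blast
    then have "2*(k+1)*card (fst ` P) \<le> 2*(k+1)*a" by (rule mult_le_mono2)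
    moreover have "k*2^k \<le> k*(2*b)" using kb by simp
    ultimately have nat_ineq: "card E \<le> (k+1)*a + k*b" using cnt cP by linarith
    have "real k < log 2 (real (2*b))" using less_log2_of_power[OF kb] .
    also have "log 2 (real (2*b)) = 1 + log 2 (real b)" using b1 by (simp add: log_mult)
    also have "log 2 (real b) \<le> log 2 (real n)" using b1 by (simp add: n_def)
    finally have kL: "real k \<le> log 2 (real n) + 1" by simp
    have "real (card E) \<le> real ((k+1)*a + k*b)" using nat_ineq by (simp only: of_nat_le_iff)
    also have "\<dots> = (real k + 1) * real a + real k * real b" by (simp add: algebra_simps)
    also have "\<dots> \<le> (log 2 (real n) + 2) * real a + (log 2 (real n) + 2) * real b"
    proof (rule add_mono)
      show "(real k + 1) * real a \<le> (log 2 (real n) + 2) * real a"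
        by (rule mult_right_mono) (use kL in auto)
      show "real k * real b \<le> (log 2 (real n) + 2) * real b"
        by (rule mult_right_mono) (use kL in auto)
    qed
    also have "\<dots> = real n * log 2 (real n) + 2 * real n" by (simp add: n_def algebra_simps)
    finally show ?thesis by (simp add: n_def a_def b_def)
  qed
qed

lemma lower:
  "\<exists>n\<ge>N. \<exists>U V E. PRBG U V E \<and> card U + card V = n \<and>
            real (card E) \<ge> (1/8) * real n * log 2 (real n)"
proof -
  define k where "k = Suc N"
  define n where "n = (2::nat)^k + 2^k"
  have n2: "n = 2^(N+2)" by (simp add: n_def k_def)
  have "N < 2^N" by (rule less_exp)
  moreover have "(2::nat)^N \<le> 2^(N+2)" by (rule power_increasing) auto
  ultimately have Nn: "N \<le> n" unfolding n2 by linarith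
  have cE: "Suc N * 2^N \<le> card (Ek k)" using Ek_card[of k] by (simp add: k_def)
  have "log 2 (real n) = log 2 ((2::real)^(N+2))" by (simp only: n2 of_nat_power of_nat_numeral)
  also have "\<dots> = real (N+2)" by (rule log_pow_cancel) auto
  finally have logn: "log 2 (real n) = real (N+2)" .
  have "(1/8) * real n * log 2 (real n) = (1/8) * real n * real (N+2)" using logn by simp
  also have "\<dots> = (real N + 2) * 2^N / 2" unfolding n2 by (simp add: power_add)
  also have "\<dots> \<le> (real N + 1) * 2^N" by (simp add: field_simps)
  also have "\<dots> = real (Suc N * 2^N)" by (simp add: algebra_simps)
  also have "\<dots> \<le> real (card (Ek k))" using cE by (simp only: of_nat_le_iff)
  finally have "(1/8) * real n * log 2 (real n) \<le> real (card (Ek k))" .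
  moreover have "card {0..<(2::nat)^k} + card {0..<(2::nat)^k} = n" by (simp add: n_def)
  ultimately show ?thesis using Nn Ek_PRBG[of k] by blast
qed

theorem theorem1:
  shows "(\<exists>C::real. \<forall>U V E. PRBG U V E \<longrightarrow>
            real (card E) \<le> real (card U + card V) * log 2 (real (card U + card V))
                             + C * real (card U + card V))
       \<and> (\<exists>c::real. c > 0 \<and> (\<forall>N::nat. \<exists>n\<ge>N. \<exists>U V E. PRBG U V E \<and> card U + card V = n \<and>
            real (card E) \<ge> c * real n * log 2 (real n)))"
proof
  show "\<exists>C::real. \<forall>U V E. PRBG U V E \<longrightarrow>
            real (card E) \<le> real (card U + card V) * log 2 (real (card U + card V))
                             + C * real (card U + card V)"
    using upper by blast
  show "\<exists>c::real. c > 0 \<and> (\<forall>N::nat. \<exists>n\<ge>N. \<exists>U V E. PRBG U V E \<and> card U + card V = n \<and>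
            real (card E) \<ge> c * real n * log 2 (real n))"
    using lower by (intro exI[of _ "1/8"]) auto
qed


end
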